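(* Let $X,Y$ be compact Polish spaces, $Z=X\times Y$, $\mu,\nu$ Borel probability measures on $X$ and $Y$, let $(W,d_W,\omega)$ be a metric measure space and $S:Z\times W\to\mathbb{R}$ continuous. For $\pi\in\Pi(\mu,\nu)$ let $S_\pi(w)=\int_Z S(z,w)\,d\pi(z)$. Then \[ \inf_{\pi\in\Pi(\mu,\nu)}\ \sup_{\|f\|_{L^2(\omega)}\le 1}\langle S_\pi,f\rangle_{L^2(\omega)}=\sup_{\|f\|_{L^2(\omega)}\le 1}\ \inf_{\pi\in\Pi(\mu,\nu)}\langle S_\pi,f\rangle_{L^2(\omega)}. \]
   Context: $\Pi(\mu,\nu)$ denotes the set of Borel probability measures on $X\times Y$ with marginals $\mu$ and $\nu$; $\langle\cdot,\cdot\rangle_{L^2(\omega)}$ is the $L^2(\omega)$ inner product. *)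

theory Defs
  imports "HOL-Analysis.Analysis" "HOL-Probability.Probability"
begin

definition couplings :: "'x::topological_space measure \<Rightarrow> 'y::topological_space measure \<Rightarrow> ('x \<times> 'y) measure set" where
  "couplings \<mu> \<nu> = {\<pi>. prob_space \<pi> \<and> sets \<pi> = sets borel \<and>
      distr \<pi> borel fst = \<mu> \<and> distr \<pi> borel snd = \<nu>}"

definition L2_unit_ball :: "'w measure \<Rightarrow> ('w \<Rightarrow> real) set" where
  "L2_unit_ball \<omega> = {f. f \<in> borel_measurable \<omega> \<and> integrable \<omega> (\<lambda>w. (f w)\<^sup>2) \<and>
      (\<integral>w. (f w)\<^sup>2 \<partial>\<omega>) \<le> 1}"

definition L2_inner :: "'w measure \<Rightarrow> ('w \<Rightarrow> real) \<Rightarrow> ('w \<Rightarrow> real) \<Rightarrow> real" where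
  "L2_inner \<omega> g f = (\<integral>w. g w * f w \<partial>\<omega>)"

definition S_pi :: "('z \<Rightarrow> 'w \<Rightarrow> real) \<Rightarrow> 'z measure \<Rightarrow> 'w \<Rightarrow> real" where
  "S_pi S \<pi> w = (\<integral>z. S z w \<partial>\<pi>)"

end

theory Submission
  imports Defs
begin


definition L2 :: "'w measure \<Rightarrow> ('w \<Rightarrow> real) \<Rightarrow> bool" where
  "L2 M u \<longleftrightarrow> u \<in> borel_measurable M \<and> integrable M (\<lambda>w. (u w)\<^sup>2)"

definition Q :: "'w measure \<Rightarrow> ('w \<Rightarrow> real) \<Rightarrow> real" where
  "Q M u = (\<integral>w. (u w)\<^sup>2 \<partial>M)"

definition lc :: "real \<Rightarrow> ('w \<Rightarrow> real) \<Rightarrow> real \<Rightarrow> ('w \<Rightarrow> real) \<Rightarrow> 'w \<Rightarrow> real" where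
  "lc a u b v = (\<lambda>w. a * u w + b * v w)"

lemma L2_prod_int:
  assumes "L2 M u" "L2 M v" shows "integrable M (\<lambda>w. u w * v w)"
proof (rule Bochner_Integration.integrable_bound[of M "\<lambda>w. (u w)\<^sup>2 + (v w)\<^sup>2"])
  show "integrable M (\<lambda>w. (u w)\<^sup>2 + (v w)\<^sup>2)" using assms unfolding L2_def by auto
  show "(\<lambda>w. u w * v w) \<in> borel_measurable M" using assms unfolding L2_def by auto
  show "AE x in M. norm (u x * v x) \<le> norm ((u x)\<^sup>2 + (v x)\<^sup>2)"
  proof (rule AE_I2)
    fix x
    have "0 \<le> (\<bar>u x\<bar> - \<bar>v x\<bar>)\<^sup>2" by simp
    then have "2*(\<bar>u x\<bar>*\<bar>v x\<bar>) \<le> \<bar>u x\<bar>\<^sup>2 + \<bar>v x\<bar>\<^sup>2"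
      by (simp add: power2_eq_square algebra_simps)
    moreover have "0 \<le> \<bar>u x\<bar>*\<bar>v x\<bar>" by simp
    ultimately have "\<bar>u x * v x\<bar> \<le> (u x)\<^sup>2 + (v x)\<^sup>2"
      using abs_mult[of "u x" "v x"] power2_abs[of "u x"] power2_abs[of "v x"] by linarith
    then show "norm (u x * v x) \<le> norm ((u x)\<^sup>2 + (v x)\<^sup>2)" by simp
  qed
qed

lemma L2_lc: assumes "L2 M u" "L2 M v" shows "L2 M (lc a u b v)"
proof -
  have e: "(\<lambda>w. (lc a u b v w)\<^sup>2) = (\<lambda>w. a\<^sup>2 * (u w)\<^sup>2 + (2*a*b) * (u w * v w) + b\<^sup>2 * (v w)\<^sup>2)"
    by (auto simp: lc_def power2_eq_square algebra_simps)
  have "integrable M (\<lambda>w. (lc a u b v w)\<^sup>2)"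
    unfolding e using assms L2_prod_int[OF assms] unfolding L2_def by auto
  moreover have "lc a u b v \<in> borel_measurable M" using assms unfolding L2_def lc_def by auto
  ultimately show ?thesis unfolding L2_def by auto
qed

lemma Q_lc: assumes "L2 M u" "L2 M v"
  shows "Q M (lc a u b v) = a\<^sup>2 * Q M u + 2*a*b * L2_inner M u v + b\<^sup>2 * Q M v"
proof -
  have e: "(\<lambda>w. (lc a u b v w)\<^sup>2) = (\<lambda>w. a\<^sup>2 * (u w)\<^sup>2 + (2*a*b) * (u w * v w) + b\<^sup>2 * (v w)\<^sup>2)"
    by (auto simp: lc_def power2_eq_square algebra_simps)
  show ?thesis
    unfolding Q_def e L2_inner_def using assms L2_prod_int[OF assms] unfolding L2_def by auto
qed

lemma inner_lc: assumes "L2 M u" "L2 M v" "L2 M x"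
  shows "L2_inner M x (lc a u b v) = a * L2_inner M x u + b * L2_inner M x v"
proof -
  have e: "(\<lambda>w. x w * lc a u b v w) = (\<lambda>w. a * (x w * u w) + b * (x w * v w))"
    by (auto simp: lc_def algebra_simps)
  show ?thesis
    unfolding e L2_inner_def using L2_prod_int[OF assms(3,1)] L2_prod_int[OF assms(3,2)] by auto
qed

lemma inner_sym: "L2_inner M u v = L2_inner M v u"
  unfolding L2_inner_def by (simp add: mult.commute)

lemma Q_nonneg: "Q M u \<ge> 0" unfolding Q_def by auto

lemma Q_eq_inner: "Q M u = L2_inner M u u"
  unfolding Q_def L2_inner_def by (simp add: power2_eq_square)

lemma CS_sq: assumes "L2 M u" "L2 M v"
  shows "(L2_inner M u v)\<^sup>2 \<le> Q M u * Q M v"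
proof -
  let ?B = "L2_inner M u v"
  have q: "0 \<le> Q M u - 2*t*?B + t\<^sup>2 * Q M v" for t
    using Q_lc[OF assms, of 1 "-t"] Q_nonneg[of M "lc 1 u (-t) v"] by simp
  show ?thesis
  proof (cases "Q M v = 0")
    case True
    have "?B = 0"
    proof (rule ccontr)
      assume "?B \<noteq> 0"
      then have "0 \<le> Q M u - 2*((Q M u + 1)/(2*?B))*?B" using q[of "(Q M u + 1)/(2*?B)"] True by simp
      then show False using \<open>?B \<noteq> 0\<close> by (simp add: field_simps)
    qed
    then show ?thesis by (simp add: Q_nonneg)
  next
    case False
    then have pos: "Q M v > 0" using Q_nonneg[of M v] by simp
    have "0 \<le> Q M u - 2*(?B/Q M v)*?B + (?B/Q M v)\<^sup>2 * Q M v" using q by blast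
    also have "\<dots> = Q M u - ?B\<^sup>2 / Q M v" using pos by (simp add: field_simps power2_eq_square)
    finally have "?B\<^sup>2 / Q M v \<le> Q M u" by simp
    then show ?thesis using pos by (simp add: field_simps)
  qed
qed

lemma CS: assumes "L2 M u" "L2 M v"
  shows "L2_inner M u v \<le> sqrt (Q M u) * sqrt (Q M v)"
proof -
  have "L2_inner M u v \<le> sqrt ((L2_inner M u v)\<^sup>2)" by simp
  also have "\<dots> \<le> sqrt (Q M u * Q M v)" using CS_sq[OF assms] by (rule real_sqrt_le_mono)
  finally show ?thesis by (simp add: real_sqrt_mult)
qed

lemma tri: assumes "L2 M u" "L2 M v"
  shows "sqrt (Q M (lc 1 u 1 v)) \<le> sqrt (Q M u) + sqrt (Q M v)"
proof -
  have "Q M (lc 1 u 1 v) = Q M u + 2 * L2_inner M u v + Q M v" using Q_lc[OF assms, of 1 1] by simp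
  also have "\<dots> \<le> Q M u + 2 * (sqrt (Q M u) * sqrt (Q M v)) + Q M v" using CS[OF assms] by simp
  also have "\<dots> = (sqrt (Q M u) + sqrt (Q M v))\<^sup>2"
    using Q_nonneg[of M u] Q_nonneg[of M v] by (simp add: power2_eq_square algebra_simps)
  finally have "sqrt (Q M (lc 1 u 1 v)) \<le> sqrt ((sqrt (Q M u) + sqrt (Q M v))\<^sup>2)"
    by (rule real_sqrt_le_mono)
  then show ?thesis using Q_nonneg[of M u] Q_nonneg[of M v] by simp
qed



lemma real_aux:
  fixes D x y :: real
  assumes h: "\<And>t. 0 < t \<Longrightarrow> t \<le> 1 \<Longrightarrow> D \<le> (1-t)\<^sup>2*D + 2*(1-t)*t*x + t\<^sup>2*y"
  shows "D \<le> x"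
proof (rule ccontr)
  assume "\<not> D \<le> x"
  then have lt: "x < D" by simp
  define c where "c = D - 2*x + y"
  have key: "2*(D - x) \<le> t*c" if "0 < t" "t \<le> 1" for t
  proof -
    have "D \<le> (1-t)\<^sup>2*D + 2*(1-t)*t*x + t\<^sup>2*y" using h that by blast
    then have "0 \<le> t * (2*(x - D) + t*c)" by (simp add: c_def power2_eq_square algebra_simps)
    then have "0 \<le> 2*(x - D) + t*c" using that by (simp add: zero_le_mult_iff)
    then show ?thesis by simp
  qed
  show False
  proof (cases "c \<le> D - x")
    case True
    then show False using key[of 1] lt by simp
  next
    case False
    then have cpos: "c > 0" using lt by simp
    define t where "t = (D - x)/c"
    have "0 < t" "t \<le> 1" using False lt cpos by (auto simp: t_def field_simps)
    then have "2*(D - x) \<le> t*c" by (rule key)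
    also have "t * c = D - x" using cpos by (simp add: t_def)
    finally show False using lt by simp
  qed
qed

lemma lc_diff_swap: "Q M (lc 1 u (-1) v) = Q M (lc 1 v (-1) u)"
  unfolding Q_def lc_def by (simp add: power2_commute)

lemma N_diff: assumes "L2 M u" "L2 M v"
  shows "\<bar>sqrt (Q M u) - sqrt (Q M v)\<bar> \<le> sqrt (Q M (lc 1 u (-1) v))"
proof -
  have d1: "L2 M (lc 1 u (-1) v)" "L2 M (lc 1 v (-1) u)" by (simp_all add: L2_lc assms)
  have e1: "lc 1 (lc 1 u (-1) v) 1 v = u" by (auto simp: lc_def)
  have e2: "lc 1 (lc 1 v (-1) u) 1 u = v" by (auto simp: lc_def)
  have "sqrt (Q M u) \<le> sqrt (Q M (lc 1 u (-1) v)) + sqrt (Q M v)"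
    using tri[OF d1(1) assms(2)] unfolding e1 .
  moreover have "sqrt (Q M v) \<le> sqrt (Q M (lc 1 u (-1) v)) + sqrt (Q M u)"
    using tri[OF d1(2) assms(1)] unfolding e2 lc_diff_swap[of M v u] .
  ultimately show ?thesis by linarith
qed

lemma Q_tendsto:
  assumes "L2 M p" "\<And>n. L2 M (u n)" "(\<lambda>n. Q M (lc 1 (u n) (-1) p)) \<longlonglongrightarrow> 0"
  shows "(\<lambda>n. Q M (u n)) \<longlonglongrightarrow> Q M p"
proof -
  have "(\<lambda>n. sqrt (Q M (lc 1 (u n) (-1) p))) \<longlonglongrightarrow> sqrt 0"
    by (intro tendsto_real_sqrt assms(3))
  then have z: "(\<lambda>n. sqrt (Q M (lc 1 (u n) (-1) p))) \<longlonglongrightarrow> 0" by simp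
  have "(\<lambda>n. sqrt (Q M (u n)) - sqrt (Q M p)) \<longlonglongrightarrow> 0"
    by (rule Lim_null_comparison[OF _ z]) (use N_diff[OF assms(2) assms(1)] in auto)
  then have "(\<lambda>n. sqrt (Q M (u n)) - sqrt (Q M p) + sqrt (Q M p)) \<longlonglongrightarrow> 0 + sqrt (Q M p)"
    by (intro tendsto_add tendsto_const)
  then have "(\<lambda>n. sqrt (Q M (u n))) \<longlonglongrightarrow> sqrt (Q M p)" by simp
  then have "(\<lambda>n. (sqrt (Q M (u n)))\<^sup>2) \<longlonglongrightarrow> (sqrt (Q M p))\<^sup>2" by (intro tendsto_power)
  then show ?thesis by (simp add: Q_nonneg)
qed

lemma ball_iff: "f \<in> L2_unit_ball M \<longleftrightarrow> L2 M f \<and> Q M f \<le> 1"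
  unfolding L2_unit_ball_def L2_def Q_def by auto

lemma sup_ball: assumes g: "L2 M g"
  shows "(SUP f\<in>L2_unit_ball M. ereal (L2_inner M g f)) = ereal (sqrt (Q M g))"
proof (rule antisym)
  show "(SUP f\<in>L2_unit_ball M. ereal (L2_inner M g f)) \<le> ereal (sqrt (Q M g))"
  proof (rule SUP_least)
    fix f assume "f \<in> L2_unit_ball M"
    then have f: "L2 M f" "Q M f \<le> 1" by (auto simp: ball_iff)
    have "L2_inner M g f \<le> sqrt (Q M g) * sqrt (Q M f)" by (rule CS[OF g f(1)])
    also have "\<dots> \<le> sqrt (Q M g) * 1"
      using f(2) by (intro mult_left_mono) (auto simp: Q_nonneg)
    finally show "ereal (L2_inner M g f) \<le> ereal (sqrt (Q M g))" by simp
  qed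
next
  define f0 where "f0 = lc (1 / sqrt (Q M g)) g 0 g"
  have f0L: "L2 M f0" unfolding f0_def by (rule L2_lc[OF g g])
  have Qf0: "Q M f0 = (1 / sqrt (Q M g))\<^sup>2 * Q M g"
    unfolding f0_def using Q_lc[OF g g, of "1 / sqrt (Q M g)" 0] by simp
  have "Q M f0 \<le> 1"
  proof (cases "Q M g = 0")
    case True then show ?thesis using Qf0 by simp
  next
    case False then show ?thesis using Qf0 Q_nonneg[of M g] by (simp add: power_divide)
  qed
  then have inb: "f0 \<in> L2_unit_ball M" using f0L by (simp add: ball_iff)
  have "L2_inner M g f0 = (1 / sqrt (Q M g)) * Q M g"
    unfolding f0_def using inner_lc[OF g g g, of "1 / sqrt (Q M g)" 0] Q_eq_inner[of M g] by simp
  also have "\<dots> = sqrt (Q M g)"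
  proof (cases "Q M g = 0")
    case True then show ?thesis by simp
  next
    case False then show ?thesis using Q_nonneg[of M g] by (simp add: real_div_sqrt)
  qed
  finally have "ereal (sqrt (Q M g)) = ereal (L2_inner M g f0)" by simp
  then show "ereal (sqrt (Q M g)) \<le> (SUP f\<in>L2_unit_ball M. ereal (L2_inner M g f))"
    using inb by (metis SUP_upper)
qed



lemma RF:
  fixes u :: "nat \<Rightarrow> 'w \<Rightarrow> real"
  assumes L: "\<And>n. L2 M (u n)"
    and cau: "\<And>n m. n \<le> m \<Longrightarrow> Q M (lc 1 (u m) (-1) (u n)) \<le> (1/4)^n"
  shows "\<exists>p. L2 M p \<and> (\<forall>n. Q M (lc 1 p (-1) (u n)) \<le> (1/4)^n)"
proof -
  have meas[measurable]: "u n \<in> borel_measurable M" for n using L unfolding L2_def by auto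
  define h where "h n = lc 1 (u (Suc n)) (-1) (u n)" for n
  have hL: "L2 M (h n)" for n unfolding h_def by (intro L2_lc L)
  have hQ: "Q M (h n) \<le> (1/4)^n" for n unfolding h_def by (rule cau) simp
  have hmeas[measurable]: "h n \<in> borel_measurable M" for n using hL unfolding L2_def by auto
  have hint: "integrable M (\<lambda>w. (h n w)\<^sup>2)" for n using hL unfolding L2_def by auto
  define G where "G w = (\<Sum>n. ennreal (2^n * (h n w)\<^sup>2))" for w
  have Gmeas: "G \<in> borel_measurable M" unfolding G_def by measurable
  have each: "(\<integral>\<^sup>+w. ennreal (2^n * (h n w)\<^sup>2) \<partial>M) \<le> ennreal ((1/2)^n)" for n
  proof -
    have "(\<integral>\<^sup>+w. ennreal (2^n * (h n w)\<^sup>2) \<partial>M) = ennreal (\<integral>w. 2^n * (h n w)\<^sup>2 \<partial>M)"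
      by (rule nn_integral_eq_integral) (use hint in auto)
    also have "(\<integral>w. 2^n * (h n w)\<^sup>2 \<partial>M) = 2^n * Q M (h n)" unfolding Q_def by simp
    also have "\<dots> \<le> 2^n * (1/4)^n" using hQ[of n] by (intro mult_left_mono) auto
    also have "\<dots> = (2 * (1/4))^n" by (rule power_mult_distrib[symmetric])
    also have "\<dots> = (1/2)^n" by simp
    finally show ?thesis by (simp add: ennreal_leI)
  qed
  have "(\<integral>\<^sup>+w. G w \<partial>M) = (\<Sum>n. \<integral>\<^sup>+w. ennreal (2^n * (h n w)\<^sup>2) \<partial>M)"
    unfolding G_def by (rule nn_integral_suminf) measurable
  also have "\<dots> \<le> (\<Sum>n. ennreal ((1/2)^n))" by (intro suminf_le each) auto
  also have "\<dots> = ennreal (\<Sum>n. (1/2)^n)" by (rule suminf_ennreal2) auto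
  finally have Gle: "(\<integral>\<^sup>+w. G w \<partial>M) \<le> ennreal (\<Sum>n. (1/2::real)^n)" .
  have "(\<integral>\<^sup>+w. G w \<partial>M) < \<top>" using Gle ennreal_less_top by (rule le_less_trans)
  then have AEG: "AE w in M. G w \<noteq> \<infinity>" using nn_integral_noteq_infinite[OF Gmeas] by auto
  have conv: "convergent (\<lambda>n. u n w)" if Gw: "G w \<noteq> \<infinity>" for w
  proof -
    have s1: "summable (\<lambda>n. 2^n * (h n w)\<^sup>2)"
      by (rule summable_suminf_not_top) (use Gw in \<open>auto simp: G_def\<close>)
    have s2: "summable (\<lambda>n. (2^n * (h n w)\<^sup>2 + (1/2)^n) / 2)"
      by (intro summable_divide summable_add s1 summable_geometric) simp
    have b: "norm (h n w) \<le> (2^n * (h n w)\<^sup>2 + (1/2)^n) / 2" for n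
    proof -
      define a :: real where "a = 2^n"
      have apos: "a > 0" by (simp add: a_def)
      have ha: "(1/2::real)^n = 1/a" by (simp add: a_def power_divide)
      have "0 \<le> (a * \<bar>h n w\<bar> - 1)\<^sup>2" by simp
      then have "2 * a * \<bar>h n w\<bar> \<le> a\<^sup>2 * (h n w)\<^sup>2 + 1"
        by (simp add: power2_eq_square algebra_simps)
      then have "2 * \<bar>h n w\<bar> \<le> a * (h n w)\<^sup>2 + 1/a"
        using apos by (simp add: field_simps power2_eq_square)
      then show ?thesis unfolding ha by (simp add: a_def)
    qed
    have "summable (\<lambda>n. h n w)" by (rule summable_comparison_test'[OF s2 b])
    then have "convergent (\<lambda>n. \<Sum>i<n. h i w)" by (simp add: summable_iff_convergent)
    then have c: "convergent (\<lambda>n. u 0 w + (\<Sum>i<n. h i w))" by (simp add: convergent_add_const_iff)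
    have "(\<Sum>i<n. h i w) = u n w - u 0 w" for n
      using sum_lessThan_telescope[of "\<lambda>i. u i w" n] by (simp add: h_def lc_def)
    then show ?thesis using c by simp
  qed
  define p where "p w = lim (\<lambda>n. u n w)" for w
  have pmeas[measurable]: "p \<in> borel_measurable M" unfolding p_def by measurable
  have AEconv: "AE w in M. (\<lambda>n. u n w) \<longlonglongrightarrow> p w"
    using AEG by eventually_elim (use conv in \<open>auto simp: p_def convergent_LIMSEQ_iff\<close>)
  have main: "L2 M (lc 1 p (-1) (u n)) \<and> Q M (lc 1 p (-1) (u n)) \<le> (1/4)^n" for n
  proof -
    define d where "d = lc 1 p (-1) (u n)"
    have dmeas[measurable]: "d \<in> borel_measurable M" unfolding d_def lc_def by measurable
    have "(\<integral>\<^sup>+w. ennreal ((d w)\<^sup>2) \<partial>M) = (\<integral>\<^sup>+w. liminf (\<lambda>m. ennreal ((u m w - u n w)\<^sup>2)) \<partial>M)"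
    proof (rule nn_integral_cong_AE)
      show "AE w in M. ennreal ((d w)\<^sup>2) = liminf (\<lambda>m. ennreal ((u m w - u n w)\<^sup>2))"
        using AEconv
      proof eventually_elim
        case (elim w)
        have "(\<lambda>m. ennreal ((u m w - u n w)\<^sup>2)) \<longlonglongrightarrow> ennreal ((p w - u n w)\<^sup>2)"
          by (intro tendsto_ennrealI tendsto_intros elim)
        from lim_imp_Liminf[OF sequentially_bot this]
        show ?case by (simp add: d_def lc_def)
      qed
    qed
    also have "\<dots> \<le> liminf (\<lambda>m. \<integral>\<^sup>+w. ennreal ((u m w - u n w)\<^sup>2) \<partial>M)"
      by (rule nn_integral_liminf) measurable
    also have "\<dots> \<le> limsup (\<lambda>m. \<integral>\<^sup>+w. ennreal ((u m w - u n w)\<^sup>2) \<partial>M)"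
      by (rule Liminf_le_Limsup) simp
    also have "\<dots> \<le> ennreal ((1/4)^n)"
    proof (rule Limsup_bounded)
      show "\<forall>\<^sub>F m in sequentially. (\<integral>\<^sup>+w. ennreal ((u m w - u n w)\<^sup>2) \<partial>M) \<le> ennreal ((1/4)^n)"
      proof (rule eventually_sequentiallyI[of n])
        fix m assume "n \<le> m"
        have L2d: "L2 M (lc 1 (u m) (-1) (u n))" by (intro L2_lc L)
        have "(\<integral>\<^sup>+w. ennreal ((u m w - u n w)\<^sup>2) \<partial>M) = ennreal (Q M (lc 1 (u m) (-1) (u n)))"
        proof -
          have e: "lc 1 (u m) (-1) (u n) = (\<lambda>w. u m w - u n w)" by (auto simp: lc_def)
          show ?thesis unfolding Q_def using L2d unfolding L2_def e
            by (intro nn_integral_eq_integral) auto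
        qed
        also have "\<dots> \<le> ennreal ((1/4)^n)" using cau[OF \<open>n \<le> m\<close>] by (rule ennreal_leI)
        finally show "(\<integral>\<^sup>+w. ennreal ((u m w - u n w)\<^sup>2) \<partial>M) \<le> ennreal ((1/4)^n)" .
      qed
    qed
    finally have I: "(\<integral>\<^sup>+w. ennreal ((d w)\<^sup>2) \<partial>M) \<le> ennreal ((1/4)^n)" .
    have int: "integrable M (\<lambda>w. (d w)\<^sup>2)"
    proof (rule integrableI_bounded)
      show "(\<integral>\<^sup>+w. ennreal (norm ((d w)\<^sup>2)) \<partial>M) < \<infinity>"
        using I by (simp add: le_less_trans[OF _ ennreal_less_top])
    qed measurable
    have Qe: "ennreal (Q M d) = (\<integral>\<^sup>+w. ennreal ((d w)\<^sup>2) \<partial>M)"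
      unfolding Q_def by (rule nn_integral_eq_integral[symmetric]) (use int in auto)
    have "ennreal (Q M d) \<le> ennreal ((1/4)^n)" unfolding Qe by (rule I)
    then have "Q M d \<le> (1/4)^n" by (subst (asm) ennreal_le_iff) auto
    with int show ?thesis unfolding d_def[symmetric] L2_def by auto
  qed
  have "lc 1 (lc 1 p (-1) (u 0)) 1 (u 0) = p" by (auto simp: lc_def)
  then have "L2 M p" using L2_lc[OF conjunct1[OF main[of 0]] L[of 0], of 1 1] by simp
  then show ?thesis using main by blast
qed



lemma abstract_minimax:
  fixes M :: "'w measure" and K :: "('w \<Rightarrow> real) set"
  assumes KL2: "\<And>g. g \<in> K \<Longrightarrow> L2 M g"
    and conv: "\<And>g h t. g \<in> K \<Longrightarrow> h \<in> K \<Longrightarrow> 0 \<le> t \<Longrightarrow> t \<le> 1 \<Longrightarrow> lc t g (1-t) h \<in> K"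
  shows "(INF g\<in>K. SUP f\<in>L2_unit_ball M. ereal (L2_inner M g f))
       = (SUP f\<in>L2_unit_ball M. INF g\<in>K. ereal (L2_inner M g f))"
proof -
  have zero_ball: "(\<lambda>w. 0) \<in> L2_unit_ball M" by (simp add: L2_unit_ball_def)
  show ?thesis
  proof (cases "K = {}")
    case True
    have "L2_unit_ball M \<noteq> {}" using zero_ball by auto
    then show ?thesis using True by simp
  next
    case Kne: False
    have LHS: "(INF g\<in>K. SUP f\<in>L2_unit_ball M. ereal (L2_inner M g f)) = (INF g\<in>K. ereal (sqrt (Q M g)))"
      by (rule INF_cong) (auto simp: sup_ball KL2)
    show ?thesis
    proof (rule antisym)
      show "(SUP f\<in>L2_unit_ball M. INF g\<in>K. ereal (L2_inner M g f))
          \<le> (INF g\<in>K. SUP f\<in>L2_unit_ball M. ereal (L2_inner M g f))"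
      proof (rule SUP_least)
        fix f assume f: "f \<in> L2_unit_ball M"
        show "(INF g\<in>K. ereal (L2_inner M g f)) \<le> (INF g\<in>K. SUP f\<in>L2_unit_ball M. ereal (L2_inner M g f))"
          by (rule INF_mono) (use f in \<open>auto intro: SUP_upper\<close>)
      qed
    next
      define D where "D = Inf (Q M ` K)"
      have bdd: "bdd_below (Q M ` K)" by (rule bdd_belowI[of _ 0]) (auto simp: Q_nonneg)
      have Dle: "D \<le> Q M g" if "g \<in> K" for g unfolding D_def using bdd that by (auto intro: cInf_lower)
      have D0: "0 \<le> D" unfolding D_def using Kne by (auto intro!: cInf_greatest simp: Q_nonneg)
      have "\<forall>n. \<exists>g. g \<in> K \<and> Q M g < D + (1/4)^n / 4"
      proof
        fix n :: nat
        have ne: "Q M ` K \<noteq> {}" using Kne by simp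
        have "Inf (Q M ` K) < D + (1/4)^n / 4" unfolding D_def by simp
        from cInf_lessD[OF ne this] obtain x where "x \<in> Q M ` K" "x < D + (1/4)^n / 4" by blast
        then show "\<exists>g. g \<in> K \<and> Q M g < D + (1/4)^n / 4" by auto
      qed
      then have "\<exists>u. \<forall>n. u n \<in> K \<and> Q M (u n) < D + (1/4)^n / 4" by (rule choice)
      then obtain u where uK: "\<And>n. u n \<in> K" and uQ: "\<And>n. Q M (u n) < D + (1/4)^n / 4"
        by blast
      have uL: "L2 M (u n)" for n using KL2 uK by auto
      have cau: "Q M (lc 1 (u m) (-1) (u n)) \<le> (1/4)^n" if "n \<le> m" for n m
      proof -
        have mid: "lc (1/2) (u m) (1/2) (u n) \<in> K" using conv[OF uK uK, of "1/2"] by simp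
        have "D \<le> Q M (lc (1/2) (u m) (1/2) (u n))" by (rule Dle[OF mid])
        also have "\<dots> = (1/4) * Q M (u m) + (1/2) * L2_inner M (u m) (u n) + (1/4) * Q M (u n)"
          using Q_lc[OF uL uL, of "1/2" m "1/2" n] by (simp add: power2_eq_square)
        finally have A: "D \<le> (1/4) * Q M (u m) + (1/2) * L2_inner M (u m) (u n) + (1/4) * Q M (u n)" .
        have B: "Q M (lc 1 (u m) (-1) (u n)) = Q M (u m) - 2 * L2_inner M (u m) (u n) + Q M (u n)"
          using Q_lc[OF uL uL, of 1 m "-1" n] by simp
        have mono: "(1/4::real)^m \<le> (1/4)^n" using that by (intro power_decreasing) auto
        show ?thesis using A B uQ[of m] uQ[of n] mono by linarith
      qed
      obtain p where pL: "L2 M p" and pQ: "\<And>n. Q M (lc 1 p (-1) (u n)) \<le> (1/4)^n"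
        using RF[OF uL cau] by blast
      have z: "(\<lambda>n. Q M (lc 1 (u n) (-1) p)) \<longlonglongrightarrow> 0"
      proof (rule Lim_null_comparison[OF _ LIMSEQ_power_zero[of "1/4::real"]])
        show "\<forall>\<^sub>F n in sequentially. norm (Q M (lc 1 (u n) (-1) p)) \<le> (1/4) ^ n"
          using pQ by (auto simp: lc_diff_swap[of M "u _" p] Q_nonneg)
      qed simp
      have t1: "(\<lambda>n. Q M (u n)) \<longlonglongrightarrow> Q M p" by (rule Q_tendsto[OF pL uL z])
      have t2: "(\<lambda>n. Q M (u n)) \<longlonglongrightarrow> D"
      proof (rule tendsto_sandwich[of "\<lambda>n. D" _ _ "\<lambda>n. D + (1/4)^n/4"])
        show "\<forall>\<^sub>F n in sequentially. D \<le> Q M (u n)" using Dle uK by (intro always_eventually allI) auto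
        show "\<forall>\<^sub>F n in sequentially. Q M (u n) \<le> D + (1/4)^n/4" using uQ by (intro always_eventually allI less_imp_le)
        have p0: "(\<lambda>n. (1/4::real)^n) \<longlonglongrightarrow> 0" by (rule LIMSEQ_power_zero) simp
        have "(\<lambda>n. D + (1/4::real)^n/4) \<longlonglongrightarrow> D + 0/4"
          by (rule tendsto_add[OF tendsto_const tendsto_divide[OF p0 tendsto_const]]) simp
        then show "(\<lambda>n. D + (1/4::real)^n/4) \<longlonglongrightarrow> D" by simp
      qed simp
      have QpD: "Q M p = D" using LIMSEQ_unique[OF t1 t2] .
      have key: "D \<le> L2_inner M h p" if hK: "h \<in> K" for h
      proof -
        have hL: "L2 M h" by (rule KL2[OF hK])
        have "D \<le> (1-t)\<^sup>2*D + 2*(1-t)*t*L2_inner M p h + t\<^sup>2*Q M h" if t: "0 < t" "t \<le> 1" for t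
        proof -
          define v where "v n = lc (1-t) (u n) t h" for n
          have vK: "v n \<in> K" for n using conv[OF uK hK, of "1-t"] t by (simp add: v_def)
          have vL: "L2 M (v n)" for n using vK KL2 by auto
          have vlimL: "L2 M (lc (1-t) p t h)" by (rule L2_lc[OF pL hL])
          have e: "Q M (lc 1 (v n) (-1) (lc (1-t) p t h)) = (1-t)\<^sup>2 * Q M (lc 1 (u n) (-1) p)" for n
          proof -
            have "(\<lambda>w. (lc 1 (v n) (-1) (lc (1-t) p t h) w)\<^sup>2) = (\<lambda>w. (1-t)\<^sup>2 * (lc 1 (u n) (-1) p w)\<^sup>2)"
              by (auto simp: v_def lc_def power2_eq_square algebra_simps)
            then show ?thesis unfolding Q_def by simp
          qed
          have "(\<lambda>n. (1-t)\<^sup>2 * Q M (lc 1 (u n) (-1) p)) \<longlonglongrightarrow> (1-t)\<^sup>2 * 0"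
            by (intro tendsto_mult tendsto_const z)
          then have "(\<lambda>n. Q M (lc 1 (v n) (-1) (lc (1-t) p t h))) \<longlonglongrightarrow> 0" unfolding e by simp
          then have "(\<lambda>n. Q M (v n)) \<longlonglongrightarrow> Q M (lc (1-t) p t h)" by (rule Q_tendsto[OF vlimL vL])
          then have "D \<le> Q M (lc (1-t) p t h)"
            by (rule LIMSEQ_le_const) (use Dle vK in auto)
          also have "\<dots> = (1-t)\<^sup>2*D + 2*(1-t)*t*L2_inner M p h + t\<^sup>2*Q M h"
            using Q_lc[OF pL hL, of "1-t" t] QpD by simp
          finally show ?thesis .
        qed
        then have "D \<le> L2_inner M p h" by (rule real_aux)
        then show ?thesis by (simp add: inner_sym)
      qed
      define f where "f = lc (1 / sqrt D) p 0 p"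
      have fL: "L2 M f" unfolding f_def by (rule L2_lc[OF pL pL])
      have Qf: "Q M f = (1 / sqrt D)\<^sup>2 * D"
        unfolding f_def using Q_lc[OF pL pL, of "1 / sqrt D" 0] QpD by simp
      have "Q M f \<le> 1"
      proof (cases "D = 0")
        case True then show ?thesis using Qf by simp
      next
        case False then show ?thesis using Qf D0 by (simp add: power_divide)
      qed
      then have fball: "f \<in> L2_unit_ball M" using fL by (simp add: ball_iff)
      have fin: "sqrt D \<le> L2_inner M h f" if hK: "h \<in> K" for h
      proof -
        have hL: "L2 M h" by (rule KL2[OF hK])
        have "L2_inner M h f = (1 / sqrt D) * L2_inner M h p"
          unfolding f_def using inner_lc[OF pL pL hL, of "1 / sqrt D" 0] by simp
        also have "\<dots> \<ge> (1 / sqrt D) * D" using key[OF hK] D0 by (intro mult_left_mono) auto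
        finally have "(1 / sqrt D) * D \<le> L2_inner M h f" .
        moreover have "(1 / sqrt D) * D = sqrt D"
          using D0 by (cases "D = 0") (auto simp: real_div_sqrt)
        ultimately show ?thesis by simp
      qed
      have "(INF g\<in>K. ereal (sqrt (Q M g))) \<le> ereal (sqrt D)"
      proof (rule LIMSEQ_le_const)
        show "(\<lambda>n. ereal (sqrt (Q M (u n)))) \<longlonglongrightarrow> ereal (sqrt D)"
          unfolding lim_ereal by (intro tendsto_real_sqrt t2)
        show "\<exists>N. \<forall>n\<ge>N. (INF g\<in>K. ereal (sqrt (Q M g))) \<le> ereal (sqrt (Q M (u n)))"
          using uK by (auto intro: INF_lower)
      qed
      also have "\<dots> \<le> (INF h\<in>K. ereal (L2_inner M h f))"
        by (rule INF_greatest) (use fin in auto)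
      also have "\<dots> \<le> (SUP f\<in>L2_unit_ball M. INF g\<in>K. ereal (L2_inner M g f))"
        using fball by (rule SUP_upper)
      finally show "(INF g\<in>K. SUP f\<in>L2_unit_ball M. ereal (L2_inner M g f))
          \<le> (SUP f\<in>L2_unit_ball M. INF g\<in>K. ereal (L2_inner M g f))" unfolding LHS .
    qed
  qed
qed



definition mixm :: "real \<Rightarrow> 'a measure \<Rightarrow> 'a measure \<Rightarrow> 'a measure" where
  "mixm t P1 P2 = measure_pmf (bernoulli_pmf t) \<bind> (\<lambda>b. if b then P1 else P2)"

context
  fixes t :: real and P1 P2 N :: "'a measure"
  assumes t0: "0 \<le> t" and t1: "t \<le> 1"
    and p1: "prob_space P1" and p2: "prob_space P2"
    and s1: "sets P1 = sets N" and s2: "sets P2 = sets N"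
begin

lemma mix_kernel: "(\<lambda>b. if b then P1 else P2) \<in> measurable (measure_pmf (bernoulli_pmf t)) (subprob_algebra N)"
proof -
  have "(\<lambda>b. if b then P1 else P2) \<in> measurable (count_space UNIV) (subprob_algebra N)"
    using p1 p2 s1 s2 by (auto simp: space_subprob_algebra prob_space_imp_subprob_space)
  then show ?thesis by (simp add: measurable_cong_sets[OF sets_measure_pmf_count_space refl])
qed

lemma sets_mixm: "sets (mixm t P1 P2) = sets N"
  unfolding mixm_def by (rule sets_bind) (auto simp: s1 s2)

lemma prob_space_mixm: "prob_space (mixm t P1 P2)"
  unfolding mixm_def
  by (rule prob_space.prob_space_bind[OF prob_space_measure_pmf _ mix_kernel])
     (auto intro!: AE_I2 simp: p1 p2)

lemma nn_integral_mixm: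
  assumes f: "f \<in> borel_measurable N"
  shows "(\<integral>\<^sup>+x. f x \<partial>mixm t P1 P2) = ennreal t * (\<integral>\<^sup>+x. f x \<partial>P1) + ennreal (1-t) * (\<integral>\<^sup>+x. f x \<partial>P2)"
proof -
  have "(\<integral>\<^sup>+x. f x \<partial>mixm t P1 P2) = (\<integral>\<^sup>+b. (\<integral>\<^sup>+y. f y \<partial>(if b then P1 else P2)) \<partial>measure_pmf (bernoulli_pmf t))"
    unfolding mixm_def by (rule nn_integral_bind[OF f mix_kernel])
  also have "\<dots> = (\<Sum>b\<in>UNIV. (\<integral>\<^sup>+y. f y \<partial>(if b then P1 else P2)) * pmf (bernoulli_pmf t) b)"
    by (rule nn_integral_measure_pmf_support) auto
  also have "\<dots> = ennreal t * (\<integral>\<^sup>+x. f x \<partial>P1) + ennreal (1-t) * (\<integral>\<^sup>+x. f x \<partial>P2)"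
    using t0 t1 by (simp add: UNIV_bool mult.commute)
  finally show ?thesis .
qed

lemma emeasure_mixm:
  assumes A: "A \<in> sets N"
  shows "emeasure (mixm t P1 P2) A = ennreal t * emeasure P1 A + ennreal (1-t) * emeasure P2 A"
proof -
  have "emeasure (mixm t P1 P2) A = (\<integral>\<^sup>+x. indicator A x \<partial>mixm t P1 P2)"
    using A by (simp add: sets_mixm)
  also have "\<dots> = ennreal t * (\<integral>\<^sup>+x. indicator A x \<partial>P1) + ennreal (1-t) * (\<integral>\<^sup>+x. indicator A x \<partial>P2)"
    by (rule nn_integral_mixm) (use A in simp)
  also have "\<dots> = ennreal t * emeasure P1 A + ennreal (1-t) * emeasure P2 A"
    using A s1 s2 by simp
  finally show ?thesis .
qed

lemma integral_mixm:
  fixes f :: "'a \<Rightarrow> real"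
  assumes f: "f \<in> borel_measurable N" and bnd: "\<And>x. \<bar>f x\<bar> \<le> B"
  shows "(\<integral>x. f x \<partial>mixm t P1 P2) = t * (\<integral>x. f x \<partial>P1) + (1-t) * (\<integral>x. f x \<partial>P2)"
proof -
  define g where "g x = f x + B" for x
  have gm: "g \<in> borel_measurable N" unfolding g_def using f by measurable
  have gnn: "0 \<le> g x" for x unfolding g_def using bnd[of x] by linarith
  have B0: "0 \<le> B" using bnd[of undefined] by linarith
  have pm: "prob_space (mixm t P1 P2)" by (rule prob_space_mixm)
  have int: "integrable P (\<lambda>x. f x)" if "prob_space P" "sets P = sets N" for P
  proof -
    have fm: "f \<in> borel_measurable P" by (subst measurable_cong_sets[OF that(2) refl]) (rule f)
    show ?thesis
      by (rule finite_measure.integrable_const_bound[OF prob_space.finite_measure[OF that(1)] _ fm, where B=B])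
         (use bnd in auto)
  qed
  have intg: "(\<integral>x. g x \<partial>P) = (\<integral>x. f x \<partial>P) + B" if "prob_space P" "sets P = sets N" for P
  proof -
    have "(\<integral>x. f x + B \<partial>P) = (\<integral>x. f x \<partial>P) + (\<integral>x. B \<partial>P)"
      by (rule Bochner_Integration.integral_add[OF int[OF that] finite_measure.integrable_const[OF prob_space.finite_measure[OF that(1)]]])
    then show ?thesis unfolding g_def using prob_space.prob_space[OF that(1)] by simp
  qed
  have nn: "0 \<le> (\<integral>x. f x \<partial>P) + B" if "prob_space P" "sets P = sets N" for P
  proof -
    have "0 \<le> (\<integral>x. g x \<partial>P)" by (rule integral_nonneg_AE) (simp add: gnn)
    then show ?thesis using intg[OF that] by simp
  qed
  have nng: "(\<integral>\<^sup>+x. ennreal (g x) \<partial>P) = ennreal ((\<integral>x. f x \<partial>P) + B)" if "prob_space P" "sets P = sets N" for P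
  proof -
    have "integrable P g" unfolding g_def
      by (rule Bochner_Integration.integrable_add[OF int[OF that] finite_measure.integrable_const[OF prob_space.finite_measure[OF that(1)]]])
    then have "(\<integral>\<^sup>+x. ennreal (g x) \<partial>P) = ennreal (\<integral>x. g x \<partial>P)"
      by (intro nn_integral_eq_integral) (auto simp: gnn)
    then show ?thesis using intg[OF that] by simp
  qed
  have "ennreal ((\<integral>x. f x \<partial>mixm t P1 P2) + B) = (\<integral>\<^sup>+x. ennreal (g x) \<partial>mixm t P1 P2)"
    by (rule nng[OF pm sets_mixm, symmetric])
  also have "\<dots> = ennreal t * (\<integral>\<^sup>+x. ennreal (g x) \<partial>P1) + ennreal (1-t) * (\<integral>\<^sup>+x. ennreal (g x) \<partial>P2)"
    by (rule nn_integral_mixm) (use gm in measurable)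
  also have "\<dots> = ennreal t * ennreal ((\<integral>x. f x \<partial>P1) + B) + ennreal (1-t) * ennreal ((\<integral>x. f x \<partial>P2) + B)"
    using nng[OF p1 s1] nng[OF p2 s2] by simp
  also have "\<dots> = ennreal (t * ((\<integral>x. f x \<partial>P1) + B) + (1-t) * ((\<integral>x. f x \<partial>P2) + B))"
  proof -
    have a: "0 \<le> (\<integral>x. f x \<partial>P1) + B" by (rule nn[OF p1 s1])
    have b: "0 \<le> (\<integral>x. f x \<partial>P2) + B" by (rule nn[OF p2 s2])
    have e1: "ennreal t * ennreal ((\<integral>x. f x \<partial>P1) + B) = ennreal (t * ((\<integral>x. f x \<partial>P1) + B))"
      using t0 a by (rule ennreal_mult[symmetric])
    have e2: "ennreal (1-t) * ennreal ((\<integral>x. f x \<partial>P2) + B) = ennreal ((1-t) * ((\<integral>x. f x \<partial>P2) + B))"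
      using t1 b by (intro ennreal_mult[symmetric]) auto
    have e3: "ennreal (t * ((\<integral>x. f x \<partial>P1) + B)) + ennreal ((1-t) * ((\<integral>x. f x \<partial>P2) + B))
        = ennreal (t * ((\<integral>x. f x \<partial>P1) + B) + (1-t) * ((\<integral>x. f x \<partial>P2) + B))"
      by (rule ennreal_plus[symmetric, OF mult_nonneg_nonneg[OF t0 a] mult_nonneg_nonneg[OF _ b]]) (use t1 in simp)
    show ?thesis by (simp only: e1 e2 e3)
  qed
  finally have "ennreal ((\<integral>x. f x \<partial>mixm t P1 P2) + B) = ennreal (t * ((\<integral>x. f x \<partial>P1) + B) + (1-t) * ((\<integral>x. f x \<partial>P2) + B))" .
  moreover have "0 \<le> (\<integral>x. f x \<partial>mixm t P1 P2) + B" by (rule nn[OF pm sets_mixm])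
  moreover have "0 \<le> t * ((\<integral>x. f x \<partial>P1) + B) + (1-t) * ((\<integral>x. f x \<partial>P2) + B)"
    by (rule add_nonneg_nonneg[OF mult_nonneg_nonneg[OF t0 nn[OF p1 s1]] mult_nonneg_nonneg[OF _ nn[OF p2 s2]]]) (use t1 in simp)
  ultimately have "(\<integral>x. f x \<partial>mixm t P1 P2) + B = t * ((\<integral>x. f x \<partial>P1) + B) + (1-t) * ((\<integral>x. f x \<partial>P2) + B)"
    by (simp add: ennreal_inj)
  then show ?thesis by (simp add: algebra_simps)
qed

end



lemma mix_distr:
  fixes g :: "'a::topological_space \<Rightarrow> 'b::topological_space"
  assumes t0: "0 \<le> t" and t1: "t \<le> 1"
    and p1: "prob_space P1" and p2: "prob_space P2"
    and s1: "sets P1 = sets borel" and s2: "sets P2 = sets borel"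
    and g: "g \<in> borel_measurable borel"
    and d1: "distr P1 borel g = m" and d2: "distr P2 borel g = m"
  shows "distr (mixm t P1 P2) borel g = m"
proof -
  have sm: "sets (mixm t P1 P2) = sets borel" by (rule sets_mixm[OF t0 t1 p1 p2 s1 s2])
  have spm: "space (mixm t P1 P2) = UNIV" using sets_eq_imp_space_eq[OF sm] by simp
  have sp1: "space P1 = UNIV" using sets_eq_imp_space_eq[OF s1] by simp
  have sp2: "space P2 = UNIV" using sets_eq_imp_space_eq[OF s2] by simp
  have gm: "g \<in> measurable (mixm t P1 P2) borel" by (subst measurable_cong_sets[OF sm refl]) (rule g)
  have g1: "g \<in> measurable P1 borel" by (subst measurable_cong_sets[OF s1 refl]) (rule g)
  have g2: "g \<in> measurable P2 borel" by (subst measurable_cong_sets[OF s2 refl]) (rule g)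
  have sd: "sets m = sets borel" using d1 by (metis sets_distr)
  show ?thesis
  proof (rule measure_eqI)
    show "sets (distr (mixm t P1 P2) borel g) = sets m" using sd by simp
    fix A assume "A \<in> sets (distr (mixm t P1 P2) borel g)"
    then have A: "A \<in> sets borel" by simp
    have gA: "g -` A \<in> sets borel" using measurable_sets[OF g A] by simp
    have "emeasure (distr (mixm t P1 P2) borel g) A = emeasure (mixm t P1 P2) (g -` A)"
      using emeasure_distr[OF gm A] spm by simp
    also have "\<dots> = ennreal t * emeasure P1 (g -` A) + ennreal (1-t) * emeasure P2 (g -` A)"
      by (rule emeasure_mixm[OF t0 t1 p1 p2 s1 s2 gA])
    also have "emeasure P1 (g -` A) = emeasure m A"
      using emeasure_distr[OF g1 A] sp1 d1 by simp
    also have "emeasure P2 (g -` A) = emeasure m A"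
      using emeasure_distr[OF g2 A] sp2 d2 by simp
    also have "ennreal t * emeasure m A + ennreal (1-t) * emeasure m A = (ennreal t + ennreal (1-t)) * emeasure m A"
      by (simp add: distrib_right)
    also have "ennreal t + ennreal (1-t) = ennreal (t + (1-t))"
      using t0 t1 by (intro ennreal_plus[symmetric]) auto
    finally show "emeasure (distr (mixm t P1 P2) borel g) A = emeasure m A" by simp
  qed
qed

lemma mix_coupling:
  fixes \<mu> :: "'x::topological_space measure" and \<nu> :: "'y::topological_space measure"
  assumes "\<pi>1 \<in> couplings \<mu> \<nu>" "\<pi>2 \<in> couplings \<mu> \<nu>" "0 \<le> t" "t \<le> 1"
  shows "mixm t \<pi>1 \<pi>2 \<in> couplings \<mu> \<nu>"
proof -
  have p: "prob_space \<pi>1" "prob_space \<pi>2" "sets \<pi>1 = sets borel" "sets \<pi>2 = sets borel"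
    "distr \<pi>1 borel fst = \<mu>" "distr \<pi>1 borel snd = \<nu>" "distr \<pi>2 borel fst = \<mu>" "distr \<pi>2 borel snd = \<nu>"
    using assms(1,2) unfolding couplings_def by auto
  have fm: "(fst :: 'x \<times> 'y \<Rightarrow> 'x) \<in> borel_measurable borel"
    by (rule borel_measurable_continuous_onI) (intro continuous_intros)
  have sm: "(snd :: 'x \<times> 'y \<Rightarrow> 'y) \<in> borel_measurable borel"
    by (rule borel_measurable_continuous_onI) (intro continuous_intros)
  show ?thesis unfolding couplings_def
    using prob_space_mixm[OF assms(3,4) p(1,2,3,4)] sets_mixm[OF assms(3,4) p(1,2,3,4)]
      mix_distr[OF assms(3,4) p(1,2,3,4) fm p(5,7)] mix_distr[OF assms(3,4) p(1,2,3,4) sm p(6,8)]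
    by auto
qed

context
  fixes S :: "('x::topological_space \<times> 'y::topological_space) \<Rightarrow> 'w::metric_space \<Rightarrow> real"
  assumes cZ: "compact (UNIV :: ('x \<times> 'y) set)"
    and cont: "continuous_on UNIV (\<lambda>(z, w). S z w)"
begin

lemma S_cont1: "continuous_on UNIV (\<lambda>z. S z w)"
proof -
  have "continuous_on UNIV (\<lambda>z. (\<lambda>(z, w). S z w) (z, w))"
    by (rule continuous_on_compose2[OF cont]) (auto intro!: continuous_intros)
  then show ?thesis by simp
qed

lemma S_meas1: "(\<lambda>z. S z w) \<in> borel_measurable borel"
  by (rule borel_measurable_continuous_onI[OF S_cont1])

lemma S_bnd: "\<exists>B. \<forall>z. \<bar>S z w\<bar> \<le> B"
proof -
  have "compact ((\<lambda>z. S z w) ` UNIV)" by (rule compact_continuous_image[OF S_cont1 cZ])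
  then have "bounded ((\<lambda>z. S z w) ` UNIV)" by (rule compact_imp_bounded)
  then show ?thesis unfolding bounded_real by auto
qed

lemma S_int:
  assumes p: "prob_space P" and s: "sets P = sets borel"
  shows "integrable P (\<lambda>z. S z w)"
proof -
  obtain B where B: "\<And>z. \<bar>S z w\<bar> \<le> B" using S_bnd by blast
  have fm: "(\<lambda>z. S z w) \<in> borel_measurable P" by (subst measurable_cong_sets[OF s refl]) (rule S_meas1)
  show ?thesis
    by (rule finite_measure.integrable_const_bound[OF prob_space.finite_measure[OF p] _ fm, where B=B])
       (use B in auto)
qed

lemma S_pi_cont:
  assumes p: "prob_space P" and s: "sets P = sets borel"
  shows "continuous_on UNIV (S_pi S P)"
  unfolding continuous_on_iff
proof (intro ballI allI impI)
  fix w0 :: 'w and e :: real assume e: "0 < e"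
  have c2: "continuous_on (UNIV \<times> UNIV) (\<lambda>(w, z). S z w)"
  proof -
    have "continuous_on UNIV (\<lambda>x. (\<lambda>(z, w). S z w) (prod.swap x))"
      by (rule continuous_on_compose2[OF cont]) (auto intro!: continuous_intros)
    moreover have "(\<lambda>x. (\<lambda>(z, w). S z w) (prod.swap x)) = (\<lambda>(w, z). S z w)" by auto
    ultimately show ?thesis by simp
  qed
  obtain X0 where X0: "w0 \<in> X0" "open X0"
    and bd: "\<forall>x\<in>X0 \<inter> UNIV. \<forall>t\<in>UNIV. dist ((\<lambda>(w, z). S z w) (x, t)) ((\<lambda>(w, z). S z w) (w0, t)) \<le> e/2"
    using continuous_on_prod_compactE[OF c2 cZ, of w0 "e/2"] e by auto
  obtain d where d: "d > 0" "ball w0 d \<subseteq> X0" using X0 open_contains_ball by blast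
  show "\<exists>d>0. \<forall>x'\<in>UNIV. dist x' w0 < d \<longrightarrow> dist (S_pi S P x') (S_pi S P w0) < e"
  proof (intro exI[of _ d] conjI ballI impI d(1))
    fix w assume "dist w w0 < d"
    then have "w \<in> X0" using d(2) by (auto simp: dist_commute)
    then have pb: "\<bar>S z w - S z w0\<bar> \<le> e/2" for z using bd by (cases z) (auto simp: dist_real_def)
    have "\<bar>S_pi S P w - S_pi S P w0\<bar> = \<bar>\<integral>z. S z w - S z w0 \<partial>P\<bar>"
      unfolding S_pi_def using S_int[OF p s, of w] S_int[OF p s, of w0] by simp
    also have "\<dots> \<le> (\<integral>z. \<bar>S z w - S z w0\<bar> \<partial>P)" by (rule integral_abs_bound)
    also have "\<dots> \<le> (\<integral>z. e/2 \<partial>P)"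
      using S_int[OF p s, of w] S_int[OF p s, of w0] pb
      by (intro integral_mono) (auto intro!: finite_measure.integrable_const prob_space.finite_measure p)
    also have "\<dots> = e/2" using prob_space.prob_space[OF p] by simp
    finally show "dist (S_pi S P w) (S_pi S P w0) < e" using e by (simp add: dist_real_def)
  qed
qed

lemma S_pi_mix:
  assumes t0: "0 \<le> t" and t1: "t \<le> 1"
    and p1: "prob_space P1" and p2: "prob_space P2"
    and s1: "sets P1 = sets borel" and s2: "sets P2 = sets borel"
  shows "S_pi S (mixm t P1 P2) = lc t (S_pi S P1) (1-t) (S_pi S P2)"
proof
  fix w
  obtain B where B: "\<And>z. \<bar>S z w\<bar> \<le> B" using S_bnd by blast
  show "S_pi S (mixm t P1 P2) w = lc t (S_pi S P1) (1-t) (S_pi S P2) w"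
    unfolding S_pi_def lc_def
    by (rule integral_mixm[OF t0 t1 p1 p2 s1 s2 S_meas1 B])
qed

end

theorem mainTheorem7:
  fixes \<mu> :: "'x::polish_space measure" and \<nu> :: "'y::polish_space measure"
    and \<omega> :: "'w::metric_space measure"
    and S :: "('x \<times> 'y) \<Rightarrow> 'w \<Rightarrow> real"
  assumes "compact (UNIV :: 'x set)" and "compact (UNIV :: 'y set)"
    and "prob_space \<mu>" and "sets \<mu> = sets borel"
    and "prob_space \<nu>" and "sets \<nu> = sets borel"
    and "sets \<omega> = sets borel"
    and "continuous_on UNIV (\<lambda>(z, w). S z w)"
    and "\<And>\<pi>. \<pi> \<in> couplings \<mu> \<nu> \<Longrightarrow> integrable \<omega> (\<lambda>w. (S_pi S \<pi> w)\<^sup>2)"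
  shows "(INF \<pi>\<in>couplings \<mu> \<nu>. SUP f\<in>L2_unit_ball \<omega>. ereal (L2_inner \<omega> (S_pi S \<pi>) f))
       = (SUP f\<in>L2_unit_ball \<omega>. INF \<pi>\<in>couplings \<mu> \<nu>. ereal (L2_inner \<omega> (S_pi S \<pi>) f))"
proof -
  have cZ: "compact (UNIV :: ('x \<times> 'y) set)"
    using compact_Times[OF assms(1) assms(2)] by simp
  note cont = assms(8)
  define K where "K = S_pi S ` couplings \<mu> \<nu>"
  have KL2: "L2 \<omega> g" if "g \<in> K" for g
  proof -
    obtain \<pi> where \<pi>: "\<pi> \<in> couplings \<mu> \<nu>" and g: "g = S_pi S \<pi>" using \<open>g \<in> K\<close> K_def by auto
    have p: "prob_space \<pi>" "sets \<pi> = sets borel" using \<pi> unfolding couplings_def by auto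
    have "continuous_on UNIV (S_pi S \<pi>)" by (rule S_pi_cont[OF cZ cont p])
    then have "S_pi S \<pi> \<in> borel_measurable borel" by (rule borel_measurable_continuous_onI)
    then have "S_pi S \<pi> \<in> borel_measurable \<omega>" by (subst measurable_cong_sets[OF assms(7) refl])
    then show ?thesis unfolding g L2_def using assms(9)[OF \<pi>] by auto
  qed
  have conv: "lc t g (1-t) h \<in> K" if "g \<in> K" "h \<in> K" "0 \<le> t" "t \<le> 1" for g h t
  proof -
    obtain \<pi>1 where \<pi>1: "\<pi>1 \<in> couplings \<mu> \<nu>" and g: "g = S_pi S \<pi>1" using \<open>g \<in> K\<close> K_def by auto
    obtain \<pi>2 where \<pi>2: "\<pi>2 \<in> couplings \<mu> \<nu>" and h: "h = S_pi S \<pi>2" using \<open>h \<in> K\<close> K_def by auto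
    have p1: "prob_space \<pi>1" "sets \<pi>1 = sets borel" using \<pi>1 unfolding couplings_def by auto
    have p2: "prob_space \<pi>2" "sets \<pi>2 = sets borel" using \<pi>2 unfolding couplings_def by auto
    have "S_pi S (mixm t \<pi>1 \<pi>2) = lc t g (1-t) h"
      unfolding g h by (rule S_pi_mix[OF cZ cont that(3,4) p1(1) p2(1) p1(2) p2(2)])
    moreover have "mixm t \<pi>1 \<pi>2 \<in> couplings \<mu> \<nu>" by (rule mix_coupling[OF \<pi>1 \<pi>2 that(3,4)])
    ultimately show ?thesis unfolding K_def by (metis image_eqI)
  qed
  have "(INF g\<in>K. SUP f\<in>L2_unit_ball \<omega>. ereal (L2_inner \<omega> g f))
       = (SUP f\<in>L2_unit_ball \<omega>. INF g\<in>K. ereal (L2_inner \<omega> g f))"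
    by (rule abstract_minimax[OF KL2 conv])
  then show ?thesis unfolding K_def by (simp add: image_image)
qed

end
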